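(* Let $d\ge1$, let $k$ be an integer with $1\le k\le d$, let $\gamma=(\gamma_1,\dots,\gamma_{d-k+1})\in\mathbb R^{d-k+1}$ with $\gamma_i>-1$ for all $i$, and let $\mathbf m\in\mathbb N^k$ (positive integers). Put $\boldsymbol\gamma=(\gamma,-\mathbf m)\in\mathbb R^{d+1}$. Then for every $\mathbf n\in\mathbb N_0^d$, $$\int_{T^d}P_{\mathbf n}^{(\gamma,-\mathbf m)}(x)\,Q(x)\,x_1^{\gamma_1}\cdots x_{d-k+1}^{\gamma_{d-k+1}}\,dx=0\qquad\text{for all }Q\in\Pi^d_{|\mathbf n|-|\mathbf m|-1}.$$
   Context: $T^d=\{x\in\mathbb R^d:x_1\ge0,\dots,x_d\ge0,\ 1-|x|\ge0\}$ with $|x|=x_1+\dots+x_d$; $\Pi^d_m$ is the space of real polynomials in $d$ variables of total degree at most $m$; $|\mathbf m|$ is the sum of the entries of $\mathbf m$. For $\boldsymbol\gamma=(\gamma_1,\dots,\gamma_{d+1})\in\mathbb R^{d+1}$ and $\mathbf n\in\mathbb N_0^d$, the Rodrigues function is $P_{\mathbf n}^{\boldsymbol\gamma}(x)=x_1^{-\gamma_1}\cdots x_d^{-\gamma_d}(1-|x|)^{-\gamma_{d+1}}\frac{\partial^{|\mathbf n|}}{\partial x_1^{n_1}\cdots\partial x_d^{n_d}}\Big[x_1^{\gamma_1+n_1}\cdots x_d^{\gamma_d+n_d}(1-|x|)^{\gamma_{d+1}+|\mathbf n|}\Big]$ on the interior of $T^d$. *)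

theory Defs
  imports "HOL-Analysis.Analysis" "HOL-Probability.Probability"
begin

text \<open>Points of R^d are functions nat => real, coordinates 0..d-1 (paper's x_1..x_d).\<close>

definition abs_pt :: "nat \<Rightarrow> (nat \<Rightarrow> real) \<Rightarrow> real" where
  "abs_pt d x = (\<Sum>i<d. x i)"

definition std_simplex :: "nat \<Rightarrow> (nat \<Rightarrow> real) set" where
  "std_simplex d = {x. (\<forall>i<d. 0 \<le> x i) \<and> 0 \<le> 1 - abs_pt d x}"

abbreviation lebesgue_d :: "nat \<Rightarrow> (nat \<Rightarrow> real) measure" where
  "lebesgue_d d \<equiv> PiM {..<d} (\<lambda>_. lborel)"

text \<open>Polynomials in d variables of total degree at most M (M an integer; empty index set,
  i.e. only the zero polynomial, when M < 0).\<close>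
definition poly_space :: "nat \<Rightarrow> int \<Rightarrow> ((nat \<Rightarrow> real) \<Rightarrow> real) set" where
  "poly_space d M = {q. \<exists>c :: (nat \<Rightarrow> nat) \<Rightarrow> real.
      q = (\<lambda>x. \<Sum>\<alpha>\<in>{\<alpha>. (\<forall>i. d \<le> i \<longrightarrow> \<alpha> i = 0) \<and> int (\<Sum>i<d. \<alpha> i) \<le> M}.
                  c \<alpha> * (\<Prod>i<d. x i ^ \<alpha> i))}"

definition partial :: "nat \<Rightarrow> ((nat \<Rightarrow> real) \<Rightarrow> real) \<Rightarrow> (nat \<Rightarrow> real) \<Rightarrow> real" where
  "partial i f = (\<lambda>x. deriv (\<lambda>t. f (x(i := t))) (x i))"

definition iter_partial :: "nat \<Rightarrow> (nat \<Rightarrow> nat) \<Rightarrow> ((nat \<Rightarrow> real) \<Rightarrow> real) \<Rightarrow> (nat \<Rightarrow> real) \<Rightarrow> real" where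
  "iter_partial d n f = foldr (\<lambda>i g. (partial i ^^ n i) g) [0..<d] f"

text \<open>Rodrigues function P_n^g (g has entries g 0 .. g d, i.e. gamma_1..gamma_{d+1}),
  meaningful on the interior of T^d.\<close>
definition rodrigues :: "nat \<Rightarrow> (nat \<Rightarrow> real) \<Rightarrow> (nat \<Rightarrow> nat) \<Rightarrow> (nat \<Rightarrow> real) \<Rightarrow> real" where
  "rodrigues d g n x =
     (\<Prod>i<d. x i powr (- g i)) * (1 - abs_pt d x) powr (- g d) *
     iter_partial d n
       (\<lambda>y. (\<Prod>i<d. y i powr (g i + real (n i))) *
            (1 - abs_pt d y) powr (g d + real (\<Sum>i<d. n i))) x"

text \<open>The concatenated parameter (gamma, -m) in R^{d+1}: gamma has entries 0..d-k,
  m has entries 0..k-1.\<close>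
definition concat_param :: "nat \<Rightarrow> nat \<Rightarrow> (nat \<Rightarrow> real) \<Rightarrow> (nat \<Rightarrow> nat) \<Rightarrow> nat \<Rightarrow> real" where
  "concat_param d k \<gamma> m j =
     (if j \<le> d - k then \<gamma> j else - real (m (j - (d - k + 1))))"

end

theory Submission
  imports Defs
begin


lemma beta_scaled:
  fixes a c s :: real
  assumes a: "a > -1" and c: "c > -1" and s: "s > 0"
  shows "(\<integral>\<^sup>+y. ennreal (indicator {0<..<s} y * (y powr a * (s - y) powr c)) \<partial>lborel)
         = ennreal (s powr (a + c + 1) * Beta (a+1) (c+1))"
proof -
  have B: "((\<lambda>t. t powr a * (1 - t) powr c) has_integral Beta (a+1) (c+1)) {0<..<1}"
    using has_integral_Beta_real[of "a+1" "c+1"] a c by (simp add: has_integral_Icc_iff_Ioo)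
  have B2: "(\<integral>\<^sup>+t. ennreal (indicator {0<..<1} t * (t powr a * (1 - t) powr c)) \<partial>lborel)
      = ennreal (Beta (a+1) (c+1))"
    using nn_integral_has_integral_lebesgue[OF _ B] by simp
  have "(\<integral>\<^sup>+y. ennreal (indicator {0<..<s} y * (y powr a * (s - y) powr c)) \<partial>lborel)
     = ennreal \<bar>s\<bar> * (\<integral>\<^sup>+t. ennreal (indicator {0<..<s} (0 + s * t) * ((0 + s*t) powr a * (s - (0 + s*t)) powr c)) \<partial>lborel)"
    using s by (intro nn_integral_real_affine) auto
  also have "(\<integral>\<^sup>+t. ennreal (indicator {0<..<s} (0 + s * t) * ((0 + s*t) powr a * (s - (0 + s*t)) powr c)) \<partial>lborel)
     = (\<integral>\<^sup>+t. ennreal (s powr (a + c)) * ennreal (indicator {0<..<1} t * (t powr a * (1 - t) powr c)) \<partial>lborel)"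
  proof (intro nn_integral_cong)
    fix t :: real
    show "ennreal (indicator {0<..<s} (0 + s * t) * ((0 + s*t) powr a * (s - (0 + s*t)) powr c))
       = ennreal (s powr (a + c)) * ennreal (indicator {0<..<1} t * (t powr a * (1 - t) powr c))"
    proof (cases "t \<in> {0<..<1}")
      case True
      have "s - s * t = s * (1 - t)" by (simp add: algebra_simps)
      moreover have "s * t \<in> {0<..<s}" using True s by auto
      ultimately show ?thesis using True s
        by (simp add: powr_mult powr_add ennreal_mult'[symmetric] mult_ac)
    next
      case False
      hence "s * t \<notin> {0<..<s}" using s
        by (auto simp: mult_less_cancel_left1 zero_less_mult_iff)
      thus ?thesis using False by simp
    qed
  qed
  also have "\<dots> = ennreal (s powr (a + c)) * ennreal (Beta (a+1) (c+1))"
    by (subst nn_integral_cmult) (auto simp: B2)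
  finally have "(\<integral>\<^sup>+y. ennreal (indicator {0<..<s} y * (y powr a * (s - y) powr c)) \<partial>lborel)
     = ennreal s * (ennreal (s powr (a + c)) * ennreal (Beta (a+1) (c+1)))" using s by simp
  moreover have "Beta (a+1) (c+1) \<ge> 0" using a c by (simp add: Beta_def)
  ultimately show ?thesis using s
    by (simp add: ennreal_mult[symmetric] powr_add mult_ac)
qed

definition DirA :: "nat set \<Rightarrow> (nat \<Rightarrow> real) \<Rightarrow> real \<Rightarrow> real" where
  "DirA A e b = (\<Prod>l\<in>A. Gamma (e l + 1)) * Gamma (b + 1) / Gamma ((\<Sum>l\<in>A. e l) + b + real (card A) + 1)"

lemma meas_test:
  fixes A :: "nat set" and e :: "nat \<Rightarrow> real"
  assumes "finite A"
  shows "(\<lambda>x. ennreal (indicator {x. (\<forall>l\<in>A. 0 < x l) \<and> (\<Sum>l\<in>A. x l) < s} x * ((\<Prod>l\<in>A. x l powr e l) * (s - (\<Sum>l\<in>A. x l)) powr b))) \<in> borel_measurable (PiM A (\<lambda>_. lborel))"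
  using assms by measurable

lemma dir_nn:
  fixes A :: "nat set" and e :: "nat \<Rightarrow> real"
  assumes "finite A" "\<forall>l\<in>A. e l > -1" "b > -1" "s > 0"
  shows "(\<integral>\<^sup>+x. ennreal (indicator {x. (\<forall>l\<in>A. 0 < x l) \<and> (\<Sum>l\<in>A. x l) < s} x * ((\<Prod>l\<in>A. x l powr e l) * (s - (\<Sum>l\<in>A. x l)) powr b)) \<partial>PiM A (\<lambda>_. lborel))
     = ennreal (DirA A e b * s powr ((\<Sum>l\<in>A. e l) + b + real (card A)))"
  using assms
proof (induction A arbitrary: s rule: finite_induct)
  case empty
  have "Gamma (b + 1) \<noteq> 0" using Gamma_real_pos[of "b+1"] empty by force
  thus ?case using empty by (simp add: PiM_empty DirA_def nn_integral_count_space_finite)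
next
  case (insert i A s)
  interpret product_sigma_finite "\<lambda>_. lborel" by standard
  define C where "C = (\<Sum>l\<in>A. e l) + b + real (card A)"
  define D where "D = DirA A e b"
  have eA: "\<forall>l\<in>A. e l > -1" and ei: "e i > -1" using insert by auto
  have sumA: "(\<Sum>l\<in>A. e l) \<ge> - real (card A)"
  proof -
    have "(\<Sum>l\<in>A. e l) \<ge> (\<Sum>l\<in>A. (-1::real))"
      using eA by (intro sum_mono) (auto simp: less_imp_le)
    thus ?thesis by auto
  qed
  have C1: "C > -1" using sumA insert.prems by (auto simp: C_def)
  have Dnn: "D \<ge> 0"
  proof -
    have "(\<Sum>l\<in>A. e l) + b + real (card A) + 1 > 0" using C1 C_def by simp
    thus ?thesis using eA insert.prems unfolding D_def DirA_def
      by (intro divide_nonneg_nonneg mult_nonneg_nonneg prod_nonneg) (auto intro!: Gamma_real_nonneg less_imp_le)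
  qed
  let ?S = "\<lambda>A s. {x::nat\<Rightarrow>real. (\<forall>l\<in>A. 0 < x l) \<and> (\<Sum>l\<in>A. x l) < s}"
  have "(\<integral>\<^sup>+x. ennreal (indicator (?S (insert i A) s) x * ((\<Prod>l\<in>insert i A. x l powr e l) * (s - (\<Sum>l\<in>insert i A. x l)) powr b)) \<partial>PiM (insert i A) (\<lambda>_. lborel))
      = (\<integral>\<^sup>+y. \<integral>\<^sup>+x. ennreal (indicator (?S (insert i A) s) (x(i:=y)) * ((\<Prod>l\<in>insert i A. (x(i:=y)) l powr e l) * (s - (\<Sum>l\<in>insert i A. (x(i:=y)) l)) powr b)) \<partial>PiM A (\<lambda>_. lborel) \<partial>lborel)"
    using insert.hyps by (subst product_nn_integral_insert_rev) (auto, measurable)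
  also have "\<dots> = (\<integral>\<^sup>+y. \<integral>\<^sup>+x. ennreal (indicator {0<..<s} y * y powr e i) * ennreal (indicator (?S A (s - y)) x * ((\<Prod>l\<in>A. x l powr e l) * ((s - y) - (\<Sum>l\<in>A. x l)) powr b)) \<partial>PiM A (\<lambda>_. lborel) \<partial>lborel)"
  proof (intro nn_integral_cong)
    fix y :: real and x :: "nat \<Rightarrow> real"
    have P: "(\<Prod>l\<in>insert i A. (x(i:=y)) l powr e l) = y powr e i * (\<Prod>l\<in>A. x l powr e l)"
    proof -
      have "(\<Prod>l\<in>A. (x(i:=y)) l powr e l) = (\<Prod>l\<in>A. x l powr e l)"
        by (rule prod.cong) (use insert.hyps in auto)
      thus ?thesis using insert.hyps by simp
    qed
    have S: "(\<Sum>l\<in>insert i A. (x(i:=y)) l) = y + (\<Sum>l\<in>A. x l)"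
    proof -
      have "(\<Sum>l\<in>A. (x(i:=y)) l) = (\<Sum>l\<in>A. x l)"
        by (rule sum.cong) (use insert.hyps in auto)
      thus ?thesis using insert.hyps by simp
    qed
    have "(\<forall>l\<in>A. 0 < x l) \<Longrightarrow> (\<Sum>l\<in>A. x l) \<ge> 0" by (intro sum_nonneg) (auto simp: less_imp_le)
    hence I: "indicator (?S (insert i A) s) (x(i:=y)) = (indicator {0<..<s} y * indicator (?S A (s - y)) x :: real)"
      using insert.hyps S by (auto simp: indicator_def)
    show "ennreal (indicator (?S (insert i A) s) (x(i:=y)) * ((\<Prod>l\<in>insert i A. (x(i:=y)) l powr e l) * (s - (\<Sum>l\<in>insert i A. (x(i:=y)) l)) powr b))
       = ennreal (indicator {0<..<s} y * y powr e i) * ennreal (indicator (?S A (s - y)) x * ((\<Prod>l\<in>A. x l powr e l) * ((s - y) - (\<Sum>l\<in>A. x l)) powr b))"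
      unfolding I P S by (auto simp: ennreal_mult'[symmetric] indicator_def diff_diff_eq mult_ac prod_nonneg)
  qed
  also have "\<dots> = (\<integral>\<^sup>+y. ennreal (indicator {0<..<s} y * y powr e i) * ennreal (D * (s - y) powr C) \<partial>lborel)"
  proof (intro nn_integral_cong)
    fix y :: real
    show "(\<integral>\<^sup>+x. ennreal (indicator {0<..<s} y * y powr e i) * ennreal (indicator (?S A (s - y)) x * ((\<Prod>l\<in>A. x l powr e l) * ((s - y) - (\<Sum>l\<in>A. x l)) powr b)) \<partial>PiM A (\<lambda>_. lborel))
       = ennreal (indicator {0<..<s} y * y powr e i) * ennreal (D * (s - y) powr C)"
    proof (cases "y \<in> {0<..<s}")
      case True
      hence "s - y > 0" by auto
      with insert.IH[of "s - y"] eA insert.prems show ?thesis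
        by (subst nn_integral_cmult) (auto simp: D_def C_def, measurable)
    qed simp
  qed
  also have "\<dots> = (\<integral>\<^sup>+y. ennreal D * ennreal (indicator {0<..<s} y * (y powr e i * (s - y) powr C)) \<partial>lborel)"
    by (intro nn_integral_cong) (auto simp: ennreal_mult[symmetric] Dnn indicator_def mult_ac)
  also have "\<dots> = ennreal D * ennreal (s powr (e i + C + 1) * Beta (e i + 1) (C + 1))"
    using beta_scaled[OF ei C1 insert.prems(3)] by (subst nn_integral_cmult) auto
  also have "\<dots> = ennreal (DirA (insert i A) e b * s powr ((\<Sum>l\<in>insert i A. e l) + b + real (card (insert i A))))"
  proof -
    have g1: "Gamma (C + 1) \<noteq> 0" using Gamma_real_pos[of "C+1"] C1 by force
    have "D * Beta (e i + 1) (C + 1) = DirA (insert i A) e b"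
      using insert.hyps g1 unfolding D_def DirA_def Beta_def C_def
      by (simp add: field_simps)
    moreover have "e i + C + 1 = (\<Sum>l\<in>insert i A. e l) + b + real (card (insert i A))"
      using insert.hyps by (simp add: C_def)
    moreover have Bnn: "Beta (e i + 1) (C+1) \<ge> 0" using ei C1 by (simp add: Beta_def)
    moreover have "ennreal D * ennreal (s powr (e i + C + 1) * Beta (e i + 1) (C + 1))
        = ennreal (D * Beta (e i + 1) (C + 1) * s powr (e i + C + 1))"
      using Dnn Bnn by (simp add: ennreal_mult mult_ac)
    ultimately show ?thesis by simp
  qed
  finally show ?case .
qed



type_synonym trm = "real \<times> (nat \<Rightarrow> real) \<times> real"

fun tev :: "nat \<Rightarrow> trm \<Rightarrow> (nat \<Rightarrow> real) \<Rightarrow> real" where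
  "tev d (c, e, b) x = c * ((\<Prod>l<d. x l powr e l) * (1 - abs_pt d x) powr b)"

definition evs :: "nat \<Rightarrow> trm list \<Rightarrow> (nat \<Rightarrow> real) \<Rightarrow> real" where
  "evs d T x = (\<Sum>t\<leftarrow>T. tev d t x)"

fun Dterm :: "nat \<Rightarrow> trm \<Rightarrow> trm list" where
  "Dterm i (c, e, b) = [(c * e i, e(i := e i - 1), b), (- (c * b), e, b - 1)]"

definition Dl :: "nat \<Rightarrow> trm list \<Rightarrow> trm list" where
  "Dl i T = concat (map (Dterm i) T)"

definition Dlist :: "nat list \<Rightarrow> trm list \<Rightarrow> trm list" where
  "Dlist ds T = foldr Dl ds T"

fun tmul :: "trm \<Rightarrow> trm \<Rightarrow> trm" where
  "tmul (c1, e1, b1) (c2, e2, b2) = (c1 * c2, \<lambda>l. e1 l + e2 l, b1 + b2)"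

definition pl :: "trm list \<Rightarrow> trm list \<Rightarrow> trm list" where
  "pl R G = concat (map (\<lambda>r. map (tmul r) G) R)"

definition Dir :: "nat \<Rightarrow> (nat \<Rightarrow> real) \<Rightarrow> real \<Rightarrow> real" where
  "Dir d e b = DirA {..<d} e b"

fun Lt :: "nat \<Rightarrow> trm \<Rightarrow> real" where
  "Lt d (c, e, b) = c * Dir d e b"

definition L :: "nat \<Rightarrow> trm list \<Rightarrow> real" where
  "L d T = (\<Sum>t\<leftarrow>T. Lt d t)"

definition cnt :: "nat list \<Rightarrow> nat \<Rightarrow> nat" where
  "cnt ds l = length (filter (\<lambda>x. x = l) ds)"

lemma L_append[simp]: "L d (A @ B) = L d A + L d B"
  by (simp add: L_def)

lemma L_Cons[simp]: "L d (t # T) = Lt d t + L d T" and L_Nil[simp]: "L d [] = 0"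
  by (simp_all add: L_def)

lemma L_concat: "L d (concat Ts) = (\<Sum>T\<leftarrow>Ts. L d T)"
  by (induction Ts) auto

lemma L_Dl: "L d (Dl i T) = (\<Sum>t\<leftarrow>T. L d (Dterm i t))"
  by (simp add: Dl_def L_concat o_def)

lemma L_pl: "L d (pl R G) = (\<Sum>r\<leftarrow>R. \<Sum>g\<leftarrow>G. Lt d (tmul r g))"
  unfolding pl_def L_concat by (simp add: L_def o_def)

lemma key_D:
  assumes "i < d" "e i > 0" "b > 0"
  shows "L d (Dterm i (c, e, b)) = 0"
proof -
  let ?P = "\<Prod>l\<in>{..<d}-{i}. Gamma (e l + 1)"
  have p1: "(\<Prod>l<d. Gamma (e l + 1)) = Gamma (e i + 1) * ?P"
    using assms by (subst prod.remove[of _ i]) auto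
  have p2: "(\<Prod>l<d. Gamma ((e(i := e i - 1)) l + 1)) = Gamma (e i) * ?P"
    using assms by (subst prod.remove[of _ i]) auto
  have s2: "(\<Sum>l<d. (e(i := e i - 1)) l) = (\<Sum>l<d. e l) - 1"
    using assms by (simp add: sum.remove[of _ i])
  have g1: "Gamma (e i + 1) = e i * Gamma (e i)"
    using assms by (intro Gamma_plus1) (auto elim!: nonpos_Reals_cases simp: nonpos_Ints_subset_nonpos_Reals[THEN subsetD])
  have g2: "Gamma (b - 1 + 1) * b = Gamma (b + 1)"
    using Gamma_plus1[of b] assms nonpos_Ints_nonpos[of b] by force
  show ?thesis
  proof -
    have s3: "(\<Sum>l<d. (e(i := e i - 1)) l) + b + real (card {..<d}) + 1 = (\<Sum>l<d. e l) + (b - 1) + real (card {..<d}) + 1"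
      using s2 by simp
    show ?thesis
      unfolding L_def using p1 p2 g1 g2
      by (simp only: Dterm.simps list.map sum_list.Cons sum_list.Nil Lt.simps Dir_def DirA_def s3)
         (simp add: field_simps)
  qed
qed

lemma sum_list_concat_map: "(\<Sum>t\<leftarrow>concat xss. f t) = (\<Sum>xs\<leftarrow>xss. \<Sum>t\<leftarrow>xs. f t)"
  by (induction xss) auto

lemma single_prod_rule:
  "L d (Dterm i (tmul r g)) = (\<Sum>r'\<leftarrow>Dterm i r. Lt d (tmul r' g)) + (\<Sum>g'\<leftarrow>Dterm i g. Lt d (tmul r g'))"
proof -
  obtain c1 e1 b1 where r: "r = (c1, e1, b1)" by (cases r) auto
  obtain c2 e2 b2 where g: "g = (c2, e2, b2)" by (cases g) auto
  have f1: "(\<lambda>l. (e1(i := e1 i - 1)) l + e2 l) = (\<lambda>l. e1 l + e2 l)(i := e1 i + e2 i - 1)"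
    by (auto simp: fun_eq_iff)
  have f2: "(\<lambda>l. e1 l + (e2(i := e2 i - 1)) l) = (\<lambda>l. e1 l + e2 l)(i := e1 i + e2 i - 1)"
    by (auto simp: fun_eq_iff)
  show ?thesis unfolding r g L_def
    by (simp only: Dterm.simps tmul.simps list.map sum_list.Cons sum_list.Nil Lt.simps f1 f2)
       (simp add: algebra_simps)
qed

lemma L_prod_rule: "L d (Dl i (pl R G)) = L d (pl (Dl i R) G) + L d (pl R (Dl i G))"
proof -
  have "L d (Dl i (pl R G)) = (\<Sum>r\<leftarrow>R. \<Sum>g\<leftarrow>G. L d (Dterm i (tmul r g)))"
    unfolding L_Dl pl_def sum_list_concat_map by (simp add: o_def)
  also have "\<dots> = (\<Sum>r\<leftarrow>R. (\<Sum>r'\<leftarrow>Dterm i r. \<Sum>g\<leftarrow>G. Lt d (tmul r' g)) + (\<Sum>g\<leftarrow>G. \<Sum>g'\<leftarrow>Dterm i g. Lt d (tmul r g')))"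
  proof (intro arg_cong[where f=sum_list] map_cong refl)
    fix r assume "r \<in> set R"
    obtain c1 e1 b1 where r: "r = (c1, e1, b1)" by (cases r) auto
    show "(\<Sum>g\<leftarrow>G. L d (Dterm i (tmul r g))) = (\<Sum>r'\<leftarrow>Dterm i r. \<Sum>g\<leftarrow>G. Lt d (tmul r' g)) + (\<Sum>g\<leftarrow>G. \<Sum>g'\<leftarrow>Dterm i g. Lt d (tmul r g'))"
      unfolding single_prod_rule by (simp add: sum_list_addf r)
  qed
  also have "\<dots> = L d (pl (Dl i R) G) + L d (pl R (Dl i G))"
    unfolding L_pl Dl_def sum_list_concat_map by (simp add: sum_list_addf o_def)
  finally show ?thesis .
qed

lemma Dlist_Cons[simp]: "Dlist (i # ds) T = Dl i (Dlist ds T)" and Dlist_Nil[simp]: "Dlist [] T = T"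
  by (simp_all add: Dlist_def)

lemma cnt_Cons[simp]: "cnt (i # ds) l = (if l = i then Suc (cnt ds l) else cnt ds l)" and cnt_Nil[simp]: "cnt [] l = 0"
  by (simp_all add: cnt_def)

lemma mem_Dl: "t \<in> set (Dl i T) \<longleftrightarrow> (\<exists>t0\<in>set T. t \<in> set (Dterm i t0))"
  by (auto simp: Dl_def)

lemma G_bounds:
  "(c, e, b) \<in> set (Dlist ds [(c0, a, b0)]) \<Longrightarrow> (\<forall>l. e l \<ge> a l - real (cnt ds l)) \<and> b \<ge> b0 - real (length ds)"
proof (induction ds arbitrary: c e b)
  case Nil thus ?case by simp
next
  case (Cons i ds)
  from Cons.prems obtain t0 where t0: "t0 \<in> set (Dlist ds [(c0, a, b0)])" "(c, e, b) \<in> set (Dterm i t0)"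
    by (auto simp: mem_Dl)
  obtain c' e' b' where t0e: "t0 = (c', e', b')" by (cases t0) auto
  from Cons.IH[of c' e' b'] t0 t0e have IH: "\<forall>l. e' l \<ge> a l - real (cnt ds l)" "b' \<ge> b0 - real (length ds)" by auto
  from t0(2) t0e have "(e = e'(i := e' i - 1) \<and> b = b') \<or> (e = e' \<and> b = b' - 1)" by auto
  thus ?case
  proof (elim disjE; intro conjI allI)
    fix l assume A: "e = e'(i := e' i - 1) \<and> b = b'"
    have "a l - real (cnt ds l) \<le> e' l" using IH by auto
    thus "a l - real (cnt (i # ds) l) \<le> e l" using A by (auto simp: of_nat_Suc)
  next
    fix l assume A: "e = e' \<and> b = b' - 1"
    have "a l - real (cnt ds l) \<le> e' l" using IH by auto
    thus "a l - real (cnt (i # ds) l) \<le> e l" using A by (auto simp: of_nat_Suc)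
  qed (use IH in auto)
qed

lemma Nats_minus1: "(x::real) \<in> \<nat> \<Longrightarrow> x \<noteq> 0 \<Longrightarrow> x - 1 \<in> \<nat>"
proof -
  assume "x \<in> \<nat>" "x \<noteq> 0"
  then obtain k where k: "x = of_nat k" "k \<noteq> 0" by (auto elim!: Nats_cases)
  hence "x - 1 = of_nat (k - 1)" by (simp add: of_nat_diff)
  thus ?thesis by simp
qed

definition inv :: "nat \<Rightarrow> (nat \<Rightarrow> real) \<Rightarrow> real \<Rightarrow> (nat \<Rightarrow> nat) \<Rightarrow> nat list \<Rightarrow> trm list \<Rightarrow> bool" where
  "inv d \<rho> M n ds R \<longleftrightarrow> (\<forall>(c,e,b)\<in>set R. (c \<noteq> 0 \<longrightarrow> (\<forall>l<d. e l \<in> \<nat>) \<and> b \<in> \<nat>)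
     \<and> (\<forall>l<d. e l \<ge> \<rho> l - (real (n l) - real (cnt ds l)))
     \<and> b \<ge> M - (real (\<Sum>l<d. n l) - real (length ds))
     \<and> (\<Sum>l<d. e l) + b = (\<Sum>l<d. \<rho> l) + M - (real (\<Sum>l<d. n l) - real (length ds)))"

lemma inv_step:
  assumes "i < d" "inv d \<rho> M n (i # ds) R"
  shows "inv d \<rho> M n ds (Dl i R)"
  unfolding inv_def
proof (intro ballI, clarify)
  fix c e b assume "(c, e, b) \<in> set (Dl i R)"
  then obtain t0 where t0: "t0 \<in> set R" "(c, e, b) \<in> set (Dterm i t0)" by (auto simp: mem_Dl)
  obtain c' e' b' where t0e: "t0 = (c', e', b')" by (cases t0) auto
  from assms(2) t0(1) have H0: "case t0 of (c,e,b) \<Rightarrow> (c \<noteq> 0 \<longrightarrow> (\<forall>l<d. e l \<in> \<nat>) \<and> b \<in> \<nat>)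
     \<and> (\<forall>l<d. e l \<ge> \<rho> l - (real (n l) - real (cnt (i#ds) l)))
     \<and> b \<ge> M - (real (\<Sum>l<d. n l) - real (length (i#ds)))
     \<and> (\<Sum>l<d. e l) + b = (\<Sum>l<d. \<rho> l) + M - (real (\<Sum>l<d. n l) - real (length (i#ds)))"
    unfolding inv_def by blast
  have H: "(c' \<noteq> 0 \<longrightarrow> (\<forall>l<d. e' l \<in> \<nat>) \<and> b' \<in> \<nat>)"
     "(\<forall>l<d. e' l \<ge> \<rho> l - (real (n l) - real (cnt (i#ds) l)))"
     "b' \<ge> M - (real (\<Sum>l<d. n l) - real (length (i#ds)))"
     "(\<Sum>l<d. e' l) + b' = (\<Sum>l<d. \<rho> l) + M - (real (\<Sum>l<d. n l) - real (length (i#ds)))"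
    using H0 unfolding t0e prod.case by blast+
  have se: "(\<Sum>l<d. (e'(i := e' i - 1)) l) = (\<Sum>l<d. e' l) - 1"
    using assms by (simp add: sum.remove[of _ i])
  from t0(2) t0e have "(c = c' * e' i \<and> e = e'(i := e' i - 1) \<and> b = b') \<or> (c = - (c' * b') \<and> e = e' \<and> b = b' - 1)" by auto
  thus "(c \<noteq> 0 \<longrightarrow> (\<forall>l<d. e l \<in> \<nat>) \<and> b \<in> \<nat>) \<and>
       (\<forall>l<d. \<rho> l - (real (n l) - real (cnt ds l)) \<le> e l) \<and>
       M - (real (sum n {..<d}) - real (length ds)) \<le> b \<and>
       sum e {..<d} + b = sum \<rho> {..<d} + M - (real (sum n {..<d}) - real (length ds))"
  proof
    assume A: "c = c' * e' i \<and> e = e'(i := e' i - 1) \<and> b = b'"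
    have P1: "c \<noteq> 0 \<longrightarrow> (\<forall>l<d. e l \<in> \<nat>) \<and> b \<in> \<nat>"
    proof
      assume "c \<noteq> 0"
      with A H(1) have "\<forall>l<d. e' l \<in> \<nat>" "b' \<in> \<nat>" "e' i \<noteq> 0" by auto
      thus "(\<forall>l<d. e l \<in> \<nat>) \<and> b \<in> \<nat>" using A assms(1) Nats_minus1 by auto
    qed
    have P2: "\<forall>l<d. \<rho> l - (real (n l) - real (cnt ds l)) \<le> e l"
    proof (intro allI impI)
      fix l assume l: "l < d"
      have "\<rho> l - (real (n l) - real (cnt (i#ds) l)) \<le> e' l" using H(2) l by blast
      thus "\<rho> l - (real (n l) - real (cnt ds l)) \<le> e l"
        using A by (auto simp: of_nat_Suc split: if_splits)
    qed
    have P3: "M - (real (sum n {..<d}) - real (length ds)) \<le> b" using A H(3) by simp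
    have P4: "sum e {..<d} + b = sum \<rho> {..<d} + M - (real (sum n {..<d}) - real (length ds))"
      using A H(4) se by simp
    show ?thesis using P1 P2 P3 P4 by blast
  next
    assume A: "c = - (c' * b') \<and> e = e' \<and> b = b' - 1"
    have P1: "c \<noteq> 0 \<longrightarrow> (\<forall>l<d. e l \<in> \<nat>) \<and> b \<in> \<nat>"
    proof
      assume "c \<noteq> 0"
      with A H(1) have "\<forall>l<d. e' l \<in> \<nat>" "b' \<in> \<nat>" "b' \<noteq> 0" by auto
      thus "(\<forall>l<d. e l \<in> \<nat>) \<and> b \<in> \<nat>" using A Nats_minus1 by auto
    qed
    have P2: "\<forall>l<d. \<rho> l - (real (n l) - real (cnt ds l)) \<le> e l"
    proof (intro allI impI)
      fix l assume l: "l < d"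
      have "\<rho> l - (real (n l) - real (cnt (i#ds) l)) \<le> e' l" using H(2) l by blast
      thus "\<rho> l - (real (n l) - real (cnt ds l)) \<le> e l"
        using A by (auto simp: of_nat_Suc split: if_splits)
    qed
    have P3: "M - (real (sum n {..<d}) - real (length ds)) \<le> b" using A H(3) by simp
    have P4: "sum e {..<d} + b = sum \<rho> {..<d} + M - (real (sum n {..<d}) - real (length ds))"
      using A H(4) by simp
    show ?thesis using P1 P2 P3 P4 by blast
  qed
qed

lemma sum_list_zero: "(\<And>x. x \<in> set xs \<Longrightarrow> f x = (0::real)) \<Longrightarrow> (\<Sum>x\<leftarrow>xs. f x) = 0"
  by (induction xs) auto

lemma mem_pl: "t \<in> set (pl R G) \<longleftrightarrow> (\<exists>r\<in>set R. \<exists>g\<in>set G. t = tmul r g)"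
  by (auto simp: pl_def)

lemma Nats_ge0: "(x::real) \<in> \<nat> \<Longrightarrow> x \<ge> 0"
  by (auto elim!: Nats_cases)

lemma alg:
  fixes d :: nat and g \<rho> :: "nat \<Rightarrow> real" and M :: real and n :: "nat \<Rightarrow> nat"
  assumes G: "\<forall>l<d. g l > -1 \<or> \<rho> l + g l \<ge> 0" and Mg: "M + g d \<ge> 0"
    and deg: "(\<Sum>l<d. \<rho> l) + M < real (\<Sum>l<d. n l)"
  shows "set ds \<subseteq> {..<d} \<Longrightarrow> (\<forall>l<d. cnt ds l \<le> n l) \<Longrightarrow> inv d \<rho> M n ds R \<Longrightarrow>
     L d (pl R (Dlist ds [(1, \<lambda>l. g l + real (n l), g d + real (\<Sum>l<d. n l))])) = 0"
proof (induction ds arbitrary: R)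
  case Nil
  have "c = 0" if "(c, e, b) \<in> set R" for c e b
  proof (rule ccontr)
    assume c: "c \<noteq> 0"
    from Nil.prems(3) that have H: "(c \<noteq> 0 \<longrightarrow> (\<forall>l<d. e l \<in> \<nat>) \<and> b \<in> \<nat>)"
      "(\<Sum>l<d. e l) + b = (\<Sum>l<d. \<rho> l) + M - (real (\<Sum>l<d. n l) - real (length ([]::nat list)))"
      unfolding inv_def by blast+
    have "(\<Sum>l<d. e l) \<ge> 0" by (rule sum_nonneg) (use H(1) c in \<open>auto intro: Nats_ge0\<close>)
    moreover have "b \<ge> 0" using H(1) c by (auto intro: Nats_ge0)
    ultimately show False using H(2) deg by simp
  qed
  hence "\<And>r. r \<in> set R \<Longrightarrow> fst r = 0" by force
  thus ?case unfolding L_pl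
    by (intro sum_list_zero) (auto intro!: sum_list_zero elim!: tmul.elims)
next
  case (Cons i ds)
  define F where "F = [(1::real, \<lambda>l. g l + real (n l), g d + real (\<Sum>l<d. n l))]"
  have i: "i < d" using Cons.prems by auto
  have cnti: "cnt ds i + 1 \<le> n i" using Cons.prems(2) i by (auto simp: le_less)
  have IH: "L d (pl (Dl i R) (Dlist ds F)) = 0"
    unfolding F_def
    using Cons.prems inv_step[OF i Cons.prems(3)] by (intro Cons.IH) (auto split: if_splits)
  have K: "L d (Dl i (pl R (Dlist ds F))) = 0"
    unfolding L_Dl
  proof (intro sum_list_zero)
    fix t assume "t \<in> set (pl R (Dlist ds F))"
    then obtain r g' where rg: "r \<in> set R" "g' \<in> set (Dlist ds F)" "t = tmul r g'" by (auto simp: mem_pl)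
    obtain c1 e1 b1 where r: "r = (c1, e1, b1)" by (cases r) auto
    obtain c2 e2 b2 where g': "g' = (c2, e2, b2)" by (cases g') auto
    show "L d (Dterm i t) = 0"
    proof (cases "c1 = 0")
      case True thus ?thesis using rg r g' by (simp)
    next
      case False
      from Cons.prems(3) rg(1) r have H: "(c1 \<noteq> 0 \<longrightarrow> (\<forall>l<d. e1 l \<in> \<nat>) \<and> b1 \<in> \<nat>)"
        "(\<forall>l<d. e1 l \<ge> \<rho> l - (real (n l) - real (cnt (i#ds) l)))"
        "b1 \<ge> M - (real (\<Sum>l<d. n l) - real (length (i#ds)))"
        unfolding inv_def by blast+
      from G_bounds[of c2 e2 b2 ds 1] rg(2) g' have GB:
        "\<forall>l. e2 l \<ge> g l + real (n l) - real (cnt ds l)" "b2 \<ge> g d + real (\<Sum>l<d. n l) - real (length ds)"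
        unfolding F_def by auto
      have e1i: "e1 i \<ge> 0" using H(1) False i by (auto intro: Nats_ge0)
      have ei: "e1 i + e2 i > 0"
      proof (cases "g i > -1")
        case True
        have "e2 i \<ge> g i + real (n i) - real (cnt ds i)" using GB by blast
        thus ?thesis using e1i True cnti by linarith
      next
        case False
        hence "\<rho> i + g i \<ge> 0" using G i by auto
        moreover have "e2 i \<ge> g i + real (n i) - real (cnt ds i)" using GB by blast
        moreover have "e1 i \<ge> \<rho> i - (real (n i) - real (cnt (i#ds) i))" using H(2) i by blast
        ultimately show ?thesis by (simp add: of_nat_Suc)
      qed
      have bi: "b1 + b2 > 0" using H(3) GB(2) Mg by simp
      show ?thesis using rg r g' key_D[OF i, of "\<lambda>l. e1 l + e2 l" "b1 + b2"] ei bi by simp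
    qed
  qed
  have "L d (pl R (Dlist (i # ds) F)) = L d (Dl i (pl R (Dlist ds F))) - L d (pl (Dl i R) (Dlist ds F))"
    using L_prod_rule[of d i R "Dlist ds F"] by simp
  thus ?case using IH K unfolding F_def by simp
qed



definition Od :: "nat \<Rightarrow> (nat \<Rightarrow> real) set" where
  "Od d = {x. (\<forall>l<d. 0 < x l) \<and> abs_pt d x < 1}"

lemma evs_Cons[simp]: "evs d (t # T) x = tev d t x + evs d T x" and evs_Nil[simp]: "evs d [] x = 0"
  by (simp_all add: evs_def)

lemma evs_append[simp]: "evs d (A @ B) x = evs d A x + evs d B x"
  by (simp add: evs_def)

lemma deriv_ev:
  assumes x: "x \<in> Od d" and i: "i < d"
  shows "((\<lambda>t. tev d tm (x(i:=t))) has_real_derivative evs d (Dterm i tm) x) (at (x i))"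
proof -
  obtain c e b where tm: "tm = (c, e, b)" by (cases tm) auto
  define P' where "P' = (\<Prod>l\<in>{..<d}-{i}. x l powr e l)"
  define S' where "S' = (\<Sum>l\<in>{..<d}-{i}. x l)"
  have xi: "x i > 0" and ab: "abs_pt d x < 1" using x i by (auto simp: Od_def)
  have absx: "abs_pt d x = x i + S'"
    unfolding abs_pt_def S'_def using i by (simp add: sum.remove[of _ i])
  have eq: "tev d tm (x(i:=t)) = c * ((t powr e i * P') * (1 - (t + S')) powr b)" for t
  proof -
    have "(\<Prod>l\<in>{..<d}-{i}. (x(i:=t)) l powr e l) = P'" unfolding P'_def by (rule prod.cong) auto
    moreover have "(\<Sum>l\<in>{..<d}-{i}. (x(i:=t)) l) = S'" unfolding S'_def by (rule sum.cong) auto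
    ultimately show ?thesis using i unfolding tm abs_pt_def
      by (simp add: prod.remove[of _ i] sum.remove[of _ i] abs_pt_def)
  qed
  have pos: "1 - (x i + S') > 0" using ab absx by simp
  have D: "((\<lambda>t. c * ((t powr e i * P') * (1 - (t + S')) powr b)) has_real_derivative
      c * ((e i * x i powr (e i - 1) * P') * (1 - (x i + S')) powr b + (x i powr e i * P') * (b * (1 - (x i + S')) powr (b - 1) * (-1)))) (at (x i))"
    by (intro DERIV_cmult DERIV_mult DERIV_fun_powr has_real_derivative_powr xi pos derivative_eq_intros) (auto simp: of_nat_1)
  have p1: "(\<Prod>l<d. x l powr (e(i := e i - 1)) l) = x i powr (e i - 1) * P'"
  proof -
    have "(\<Prod>l<d. x l powr (e(i := e i - 1)) l) = x i powr (e i - 1) * (\<Prod>l\<in>{..<d}-{i}. x l powr (e(i := e i - 1)) l)"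
      using i by (subst prod.remove[of _ i]) auto
    also have "(\<Prod>l\<in>{..<d}-{i}. x l powr (e(i := e i - 1)) l) = P'" unfolding P'_def by (rule prod.cong) auto
    finally show ?thesis .
  qed
  have p2: "(\<Prod>l<d. x l powr e l) = x i powr e i * P'"
    unfolding P'_def using i by (simp add: prod.remove[of _ i])
  have val: "evs d (Dterm i tm) x = c * ((e i * x i powr (e i - 1) * P') * (1 - (x i + S')) powr b + (x i powr e i * P') * (b * (1 - (x i + S')) powr (b - 1) * (-1)))"
    unfolding tm by (simp only: Dterm.simps evs_Cons evs_Nil tev.simps p1 p2 absx) (simp add: algebra_simps)
  show ?thesis unfolding val eq using D by simp
qed

lemma deriv_evs:
  assumes x: "x \<in> Od d" and i: "i < d"
  shows "((\<lambda>t. evs d T (x(i:=t))) has_real_derivative evs d (Dl i T) x) (at (x i))"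
proof (induction T)
  case Nil thus ?case by (simp add: Dl_def)
next
  case (Cons t T)
  have "evs d (Dl i (t # T)) x = evs d (Dterm i t) x + evs d (Dl i T) x" by (simp add: Dl_def)
  thus ?case unfolding evs_Cons using DERIV_add[OF deriv_ev[OF x i, of t] Cons] by (simp only:)
qed

lemma Od_line:
  assumes x: "x \<in> Od d" and i: "i < d"
  shows "eventually (\<lambda>t. x(i:=t) \<in> Od d) (nhds (x i))"
proof -
  define S' where "S' = (\<Sum>l\<in>{..<d}-{i}. x l)"
  have absx: "abs_pt d x = x i + S'"
    unfolding abs_pt_def S'_def using i by (simp add: sum.remove[of _ i])
  have abst: "abs_pt d (x(i:=t)) = t + S'" for t
  proof -
    have "(\<Sum>l\<in>{..<d}-{i}. (x(i:=t)) l) = S'" unfolding S'_def by (rule sum.cong) auto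
    thus ?thesis using i unfolding abs_pt_def by (simp add: sum.remove[of _ i])
  qed
  have xi: "x i > 0" and ab: "abs_pt d x < 1" using x i by (auto simp: Od_def)
  define \<delta> where "\<delta> = min (x i) (1 - abs_pt d x)"
  have "\<delta> > 0" using xi ab by (simp add: \<delta>_def)
  moreover have "x(i:=t) \<in> Od d" if "dist t (x i) < \<delta>" for t
  proof -
    have "t > 0" "t + S' < 1" using that absx by (auto simp: \<delta>_def dist_real_def abs_less_iff)
    thus ?thesis using x abst by (auto simp: Od_def)
  qed
  ultimately show ?thesis unfolding eventually_nhds_metric by blast
qed

lemma partial_evs:
  assumes f: "\<forall>y\<in>Od d. f y = evs d T y" and i: "i < d" and x: "x \<in> Od d"
  shows "partial i f x = evs d (Dl i T) x"
proof -
  have "deriv (\<lambda>t. f (x(i:=t))) (x i) = deriv (\<lambda>t. evs d T (x(i:=t))) (x i)"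
  proof (rule deriv_cong_ev)
    show "\<forall>\<^sub>F t in nhds (x i). f (x(i := t)) = evs d T (x(i := t))"
      using Od_line[OF x i] by (rule eventually_mono) (use f in blast)
  qed simp
  also have "\<dots> = evs d (Dl i T) x" by (rule DERIV_imp_deriv[OF deriv_evs[OF x i]])
  finally show ?thesis by (simp add: partial_def)
qed

lemma funpow_partial:
  assumes f: "\<forall>y\<in>Od d. f y = evs d T y" and i: "i < d"
  shows "\<forall>y\<in>Od d. (partial i ^^ k) f y = evs d ((Dl i ^^ k) T) y"
proof (induction k)
  case 0 thus ?case using f by simp
next
  case (Suc k)
  show ?case
  proof
    fix y assume "y \<in> Od d"
    thus "(partial i ^^ Suc k) f y = evs d ((Dl i ^^ Suc k) T) y"
      using partial_evs[OF Suc i] by simp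
  qed
qed

lemma foldr_partial:
  assumes "set is \<subseteq> {..<d}" "\<forall>y\<in>Od d. f y = evs d T y"
  shows "\<forall>y\<in>Od d. foldr (\<lambda>i g. (partial i ^^ n i) g) is f y = evs d (foldr (\<lambda>i T. (Dl i ^^ n i) T) is T) y"
  using assms
proof (induction "is")
  case Nil thus ?case by simp
next
  case (Cons i "is")
  have i: "i < d" using Cons.prems by simp
  have "\<forall>y\<in>Od d. foldr (\<lambda>i g. (partial i ^^ n i) g) is f y = evs d (foldr (\<lambda>i T. (Dl i ^^ n i) T) is T) y"
    using Cons by simp
  from funpow_partial[OF this i, of "n i"] show ?case by simp
qed

lemma Dlist_append: "Dlist (A @ B) T = Dlist A (Dlist B T)"
  by (simp add: Dlist_def)

lemma funpow_Dl: "(Dl i ^^ k) T = Dlist (replicate k i) T"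
proof (induction k)
  case 0 show ?case by (simp add: Dlist_def)
next
  case (Suc k)
  have "(Dl i ^^ Suc k) T = Dl i ((Dl i ^^ k) T)" by (simp only: funpow.simps o_apply)
  also have "\<dots> = Dlist (i # replicate k i) T" by (simp only: Suc Dlist_Cons)
  finally show ?case by (simp only: replicate_Suc)
qed

lemma foldr_Dl: "foldr (\<lambda>i T. (Dl i ^^ n i) T) is T = Dlist (concat (map (\<lambda>i. replicate (n i) i) is)) T"
proof (induction "is")
  case Nil show ?case by (simp add: Dlist_def)
next
  case (Cons i "is")
  have "foldr (\<lambda>i T. (Dl i ^^ n i) T) (i # is) T = (Dl i ^^ n i) (foldr (\<lambda>i T. (Dl i ^^ n i) T) is T)"
    by (simp only: foldr.simps o_apply)
  also have "\<dots> = Dlist (replicate (n i) i) (Dlist (concat (map (\<lambda>i. replicate (n i) i) is)) T)"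
    by (subst Cons) (rule funpow_Dl)
  finally show ?case by (simp only: Dlist_append list.map concat.simps)
qed

lemma cnt_append: "cnt (A @ B) l = cnt A l + cnt B l"
  by (simp add: cnt_def)

lemma cnt_replicate: "cnt (replicate k i) l = (if l = i then k else 0)"
  by (simp add: cnt_def filter_replicate)

lemma cnt_concat: "distinct is \<Longrightarrow> cnt (concat (map (\<lambda>i. replicate (n i) i) is)) l = (if l \<in> set is then n l else 0)"
proof (induction "is")
  case Nil thus ?case by (simp add: cnt_def)
next
  case (Cons i "is")
  thus ?case by (simp add: cnt_append cnt_replicate)
qed

lemma length_ds0: "length (concat (map (\<lambda>i. replicate (n i) i) [0..<d])) = (\<Sum>l<d. n l)"
  by (induction d) auto



lemma DirA_nonneg:
  assumes "finite A" "\<forall>l\<in>A. e l > -1" "b > -1"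
  shows "DirA A e b \<ge> 0"
proof -
  have "(\<Sum>l\<in>A. e l) \<ge> (\<Sum>l\<in>A. (-1::real))"
    using assms by (intro sum_mono) (auto simp: less_imp_le)
  hence "(\<Sum>l\<in>A. e l) + b + real (card A) + 1 > 0" using assms by simp
  thus ?thesis using assms unfolding DirA_def
    by (intro divide_nonneg_nonneg mult_nonneg_nonneg prod_nonneg) (auto intro!: Gamma_real_nonneg less_imp_le)
qed

lemma Od_eq: "Od d = {x. (\<forall>l\<in>{..<d}. 0 < x l) \<and> (\<Sum>l\<in>{..<d}. x l) < 1}"
  by (auto simp: Od_def abs_pt_def)

lemma hb_term:
  assumes "((\<forall>l<d. e l > -1) \<and> b > -1) \<or> c = 0"
  shows "has_bochner_integral (lebesgue_d d) (\<lambda>x. indicator (Od d) x * tev d (c,e,b) x) (Lt d (c,e,b))"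
proof (cases "c = 0")
  case True thus ?thesis by (simp add: has_bochner_integral_zero)
next
  case False
  with assms have e: "\<forall>l<d. e l > -1" and b: "b > -1" by auto
  define h where "h = (\<lambda>x. indicator (Od d) x * ((\<Prod>l<d. x l powr e l) * (1 - abs_pt d x) powr b))"
  have nn: "(\<integral>\<^sup>+x. ennreal (h x) \<partial>lebesgue_d d) = ennreal (Dir d e b)"
    using dir_nn[of "{..<d}" e b 1] e b unfolding h_def Od_eq abs_pt_def Dir_def by simp
  have hm: "h \<in> borel_measurable (lebesgue_d d)" unfolding h_def Od_eq abs_pt_def by measurable
  have ae: "AE x in lebesgue_d d. 0 \<le> h x"
    by (intro AE_I2) (auto simp: h_def intro!: mult_nonneg_nonneg prod_nonneg)
  have "Dir d e b \<ge> 0" using e b unfolding Dir_def by (intro DirA_nonneg) auto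
  hence "has_bochner_integral (lebesgue_d d) h (Dir d e b)"
    by (intro has_bochner_integral_nn_integral hm nn ae)
  from has_bochner_integral_mult_right[OF this, of c] show ?thesis
    by (simp add: h_def mult_ac)
qed

lemma hb_list:
  assumes "\<forall>(c,e,b)\<in>set T. ((\<forall>l<d. e l > -1) \<and> b > -1) \<or> c = 0"
  shows "has_bochner_integral (lebesgue_d d) (\<lambda>x. indicator (Od d) x * evs d T x) (L d T)"
  using assms
proof (induction T)
  case Nil thus ?case by (simp add: has_bochner_integral_zero)
next
  case (Cons t T)
  obtain c e b where t: "t = (c, e, b)" by (cases t) auto
  have "has_bochner_integral (lebesgue_d d) (\<lambda>x. indicator (Od d) x * tev d t x + indicator (Od d) x * evs d T x) (Lt d t + L d T)"
    using Cons hb_term[of d e b c] t by (intro has_bochner_integral_add) auto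
  thus ?case by (simp add: algebra_simps)
qed



lemma tev_tmul: "tev d (tmul r t) x = tev d r x * tev d t x"
proof -
  obtain c1 e1 b1 where r: "r = (c1, e1, b1)" by (cases r) auto
  obtain c2 e2 b2 where t: "t = (c2, e2, b2)" by (cases t) auto
  show ?thesis unfolding r t by (simp add: powr_add prod.distrib mult_ac)
qed

lemma evs_pl1:
  fixes Ts :: "trm list"
  shows "evs d (pl [r] Ts) x = tev d r x * evs d Ts x"
  by (induct Ts rule: list.induct) (auto simp: pl_def tev_tmul algebra_simps)

lemma sum_shift_if: "(\<Sum>l<(p::nat)+q. (if l < p then 0 else f (l - p))) = (\<Sum>j<q. (f j :: nat))"
  by (induction q) auto

lemma std_not_Od:
  assumes "x \<in> std_simplex d" "x \<notin> Od d"
  shows "(\<exists>l<d. x l = 0) \<or> abs_pt d x = 1"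
  using assms by (force simp: std_simplex_def Od_def)

lemma rod_zero:
  assumes "x \<in> std_simplex d" "x \<notin> Od d"
  shows "rodrigues d g n x = 0"
proof -
  from std_not_Od[OF assms] show ?thesis
  proof
    assume "\<exists>l<d. x l = 0"
    hence "(\<Prod>i<d. x i powr (- g i)) = 0" by (auto simp: prod_zero_iff)
    thus ?thesis by (simp add: rodrigues_def)
  next
    assume "abs_pt d x = 1"
    thus ?thesis by (simp add: rodrigues_def)
  qed
qed

lemma rod_Od:
  assumes "x \<in> Od d"
  shows "rodrigues d g n x = (\<Prod>i<d. x i powr (- g i)) * (1 - abs_pt d x) powr (- g d) *
     evs d (Dlist (concat (map (\<lambda>i. replicate (n i) i) [0..<d])) [(1, \<lambda>l. g l + real (n l), g d + real (\<Sum>i<d. n i))]) x"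
proof -
  have f: "\<forall>y\<in>Od d. (\<lambda>y. (\<Prod>i<d. y i powr (g i + real (n i))) * (1 - abs_pt d y) powr (g d + real (\<Sum>i<d. n i))) y
      = evs d [(1, \<lambda>l. g l + real (n l), g d + real (\<Sum>i<d. n i))] y"
    by simp
  have "iter_partial d n (\<lambda>y. (\<Prod>i<d. y i powr (g i + real (n i))) * (1 - abs_pt d y) powr (g d + real (\<Sum>i<d. n i))) x
     = evs d (foldr (\<lambda>i T. (Dl i ^^ n i) T) [0..<d] [(1, \<lambda>l. g l + real (n l), g d + real (\<Sum>i<d. n i))]) x"
    using foldr_partial[of "[0..<d]" d _ _ n, OF _ f] assms unfolding iter_partial_def
    by (auto simp: atLeast0LessThan)
  thus ?thesis unfolding rodrigues_def foldr_Dl by simp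
qed

theorem lemma2p3:
  fixes d k :: nat and \<gamma> :: "nat \<Rightarrow> real" and m n :: "nat \<Rightarrow> nat"
    and Q :: "(nat \<Rightarrow> real) \<Rightarrow> real"
  assumes "1 \<le> d" and "1 \<le> k" and "k \<le> d"
    and "\<forall>i\<le>d - k. \<gamma> i > -1"
    and "\<forall>i<k. 0 < m i"
    and "Q \<in> poly_space d (int (\<Sum>i<d. n i) - int (\<Sum>i<k. m i) - 1)"
  shows "set_integrable (lebesgue_d d) (std_simplex d)
           (\<lambda>x. rodrigues d (concat_param d k \<gamma> m) n x * Q x * (\<Prod>i\<le>d - k. x i powr \<gamma> i))
       \<and> (LINT x:std_simplex d|lebesgue_d d.
            rodrigues d (concat_param d k \<gamma> m) n x * Q x * (\<Prod>i\<le>d - k. x i powr \<gamma> i)) = 0"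
proof -
  define g where "g = concat_param d k \<gamma> m"
  define N where "N = (\<Sum>i<d. n i)"
  define F0 :: "trm list" where "F0 = [(1, \<lambda>l. g l + real (n l), g d + real N)]"
  define ds0 where "ds0 = concat (map (\<lambda>i. replicate (n i) i) [0..<d])"
  define G where "G = Dlist ds0 F0"
  define W where "W = (\<lambda>x::nat\<Rightarrow>real. \<Prod>i\<le>d - k. x i powr \<gamma> i)"
  define S where "S = {\<alpha>::nat\<Rightarrow>nat. (\<forall>i. d \<le> i \<longrightarrow> \<alpha> i = 0) \<and> int (\<Sum>i<d. \<alpha> i) \<le> int (\<Sum>i<d. n i) - int (\<Sum>i<k. m i) - 1}"
  define \<rho> where "\<rho> = (\<lambda>(\<alpha>::nat\<Rightarrow>nat) l. real (\<alpha> l) + (if l \<le> d - k then 0 else real (m (l - (d - k + 1)))))"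
  define R where "R = (\<lambda>\<alpha>. (1::real, \<rho> \<alpha>, real (m (k - 1))))"
  define Mm where "Mm = real (m (k - 1))"
  from assms(6) obtain c where Q: "Q = (\<lambda>x. \<Sum>\<alpha>\<in>S. c \<alpha> * (\<Prod>i<d. x i ^ \<alpha> i))"
    unfolding poly_space_def S_def by blast
  have g_le: "g l = \<gamma> l" if "l \<le> d - k" for l using that by (simp add: g_def concat_param_def)
  have g_gt: "g l = - real (m (l - (d - k + 1)))" if "\<not> l \<le> d - k" for l using that by (simp add: g_def concat_param_def)
  have g_d: "g d = - Mm" using assms(1,2,3) by (auto simp: g_def concat_param_def Mm_def)
  have cnt0: "cnt ds0 l = n l" if "l < d" for l using that unfolding ds0_def by (subst cnt_concat) auto
  have len0: "length ds0 = N" unfolding ds0_def N_def by (rule length_ds0)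
  have set0: "set ds0 \<subseteq> {..<d}" unfolding ds0_def by auto
  have rodOd: "rodrigues d g n x = (\<Prod>i<d. x i powr (- g i)) * (1 - abs_pt d x) powr (- g d) * evs d G x"
    if "x \<in> Od d" for x
    using rod_Od[OF that, of g n] unfolding G_def F0_def ds0_def N_def by simp
  have evR: "tev d (R \<alpha>) x = (\<Prod>i<d. x i ^ \<alpha> i) * ((\<Prod>i<d. x i powr (- g i)) * (1 - abs_pt d x) powr (- g d)) * W x"
    if x: "x \<in> Od d" for x \<alpha>
  proof -
    have pos: "\<forall>l<d. x l > 0" using x by (auto simp: Od_def)
    have "(\<Prod>l<d. x l powr \<rho> \<alpha> l) = (\<Prod>l<d. x l ^ \<alpha> l * x l powr (- g l) * (if l \<le> d - k then x l powr \<gamma> l else 1))"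
    proof (rule prod.cong[OF refl])
      fix l assume "l \<in> {..<d}"
      hence xl: "x l > 0" using pos by auto
      show "x l powr \<rho> \<alpha> l = x l ^ \<alpha> l * x l powr (- g l) * (if l \<le> d - k then x l powr \<gamma> l else 1)"
      proof (cases "l \<le> d - k")
        case True
        hence "\<rho> \<alpha> l = real (\<alpha> l) + (- g l) + \<gamma> l" using g_le by (simp add: \<rho>_def)
        thus ?thesis using True xl by (simp only: powr_add powr_realpow[OF xl] if_True)
      next
        case False
        hence "\<rho> \<alpha> l = real (\<alpha> l) + (- g l)" using g_gt by (simp add: \<rho>_def)
        thus ?thesis using False xl by (simp only: powr_add powr_realpow[OF xl] if_False mult_1_right)
      qed
    qed
    also have "\<dots> = (\<Prod>l<d. x l ^ \<alpha> l) * (\<Prod>l<d. x l powr (- g l)) * W x"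
    proof -
      have "(\<Prod>l<d. (if l \<le> d - k then x l powr \<gamma> l else 1)) = (\<Prod>l\<in>{l\<in>{..<d}. l \<le> d - k}. x l powr \<gamma> l)"
        by (rule prod.inter_filter[symmetric]) simp
      also have "{l\<in>{..<d}. l \<le> d - k} = {..d - k}" using assms(2,3) by auto
      finally show ?thesis by (simp add: prod.distrib W_def)
    qed
    finally show ?thesis by (simp add: R_def g_d Mm_def mult_ac)
  qed
  have pw: "indicator (std_simplex d) x * (rodrigues d g n x * Q x * W x)
      = (\<Sum>\<alpha>\<in>S. c \<alpha> * (indicator (Od d) x * evs d (pl [R \<alpha>] G) x))" for x
  proof (cases "x \<in> Od d")
    case True
    have "x \<in> std_simplex d" using True by (auto simp: Od_def std_simplex_def)
    define P where "P = (\<Prod>i<d. x i powr (- g i)) * (1 - abs_pt d x) powr (- g d)"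
    have "rodrigues d g n x * Q x * W x = (P * evs d G x * W x) * (\<Sum>\<alpha>\<in>S. c \<alpha> * (\<Prod>i<d. x i ^ \<alpha> i))"
      using rodOd[OF True] by (simp add: Q P_def)
    also have "\<dots> = (\<Sum>\<alpha>\<in>S. (P * evs d G x * W x) * (c \<alpha> * (\<Prod>i<d. x i ^ \<alpha> i)))"
      by (rule sum_distrib_left)
    also have "\<dots> = (\<Sum>\<alpha>\<in>S. c \<alpha> * (indicator (Od d) x * evs d (pl [R \<alpha>] G) x))"
      by (rule sum.cong) (simp_all add: evs_pl1 evR[OF True] P_def True mult_ac)
    finally show ?thesis using \<open>x \<in> std_simplex d\<close> by simp
  next
    case False
    thus ?thesis by (cases "x \<in> std_simplex d") (simp_all add: rod_zero)
  qed
  have Gb: "(\<forall>l<d. e l \<ge> g l) \<and> b \<ge> g d" if "(c', e, b) \<in> set G" for c' e b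
  proof -
    from G_bounds[of c' e b ds0 1 "\<lambda>l. g l + real (n l)" "g d + real N"] that
    have B: "\<forall>l. e l \<ge> g l + real (n l) - real (cnt ds0 l)" "b \<ge> g d + real N - real (length ds0)"
      unfolding G_def F0_def by auto
    have "e l \<ge> g l" if "l < d" for l using B(1)[rule_format, of l] cnt0[OF that] by simp
    thus ?thesis using B(2) len0 by auto
  qed
  have hb: "has_bochner_integral (lebesgue_d d) (\<lambda>x. indicator (Od d) x * evs d (pl [R \<alpha>] G) x) (L d (pl [R \<alpha>] G))" for \<alpha>
  proof (rule hb_list, intro ballI)
    fix t0 assume t0: "t0 \<in> set (pl [R \<alpha>] G)"
    obtain c' e b where t0e: "t0 = (c', e, b)" by (cases t0)
    from t0 t0e obtain t where t: "t \<in> set G" "(c', e, b) = tmul (R \<alpha>) t" by (auto simp: mem_pl)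
    obtain c2 e2 b2 where t2: "t = (c2, e2, b2)" by (cases t) auto
    have eb: "e = (\<lambda>l. \<rho> \<alpha> l + e2 l)" "b = Mm + b2" using t t2 by (auto simp: R_def Mm_def)
    have "\<forall>l<d. e l > -1"
    proof (intro allI impI)
      fix l assume l: "l < d"
      have "e2 l \<ge> g l" using Gb[of c2 e2 b2] t t2 l by auto
      show "e l > -1"
      proof (cases "l \<le> d - k")
        case True
        hence "\<rho> \<alpha> l = real (\<alpha> l)" "g l = \<gamma> l" "\<gamma> l > -1" using g_le assms(4) by (auto simp: \<rho>_def)
        thus ?thesis using \<open>e2 l \<ge> g l\<close> eb(1) by simp
      next
        case False
        hence "\<rho> \<alpha> l = real (\<alpha> l) + real (m (l - (d - k + 1)))" "g l = - real (m (l - (d - k + 1)))"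
          using g_gt by (auto simp: \<rho>_def)
        thus ?thesis using \<open>e2 l \<ge> g l\<close> eb(1) by simp
      qed
    qed
    moreover have "b > -1" using Gb[of c2 e2 b2] t t2 eb g_d by (auto simp: Mm_def)
    ultimately show "case t0 of (c, e, b) \<Rightarrow> ((\<forall>l<d. e l > -1) \<and> b > -1) \<or> c = 0"
      unfolding t0e by auto
  qed
  have zero: "L d (pl [R \<alpha>] G) = 0" if "\<alpha> \<in> S" for \<alpha>
  proof -
    have rhoN: "\<rho> \<alpha> l \<in> \<nat>" for l by (auto simp: \<rho>_def)
    have sr: "(\<Sum>l<d. \<rho> \<alpha> l) + Mm = real (\<Sum>l<d. \<alpha> l) + real (\<Sum>j<k. m j)"
    proof -
      have "(\<Sum>l<d. (if l \<le> d - k then 0 else m (l - (d - k + 1)))) = (\<Sum>l<(d-k+1)+(k-1). (if l < d-k+1 then 0 else m (l - (d - k + 1))))"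
        using assms(2,3) by (intro sum.cong) auto
      also have "\<dots> = (\<Sum>j<k-1. m j)" by (rule sum_shift_if)
      finally have X: "(\<Sum>l<d. (if l \<le> d - k then 0 else m (l - (d - k + 1)))) = (\<Sum>j<k-1. m j)" .
      have kk: "(\<Sum>j<k. m j) = (\<Sum>j<k-1. m j) + m (k-1)" using assms(2) by (cases k) auto
      have "(\<Sum>l<d. (if l \<le> d - k then 0 else m (l - (d - k + 1)))) + m (k-1) = (\<Sum>j<k. m j)"
        unfolding kk X ..
      hence "real (\<Sum>l<d. (if l \<le> d - k then 0 else m (l - (d - k + 1)))) + real (m (k-1)) = real (\<Sum>j<k. m j)"
        by (metis of_nat_add)
      moreover have "(\<Sum>l<d. \<rho> \<alpha> l) = real (\<Sum>l<d. \<alpha> l) + real (\<Sum>l<d. (if l \<le> d - k then 0 else m (l - (d - k + 1))))"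
      proof -
        have "(\<Sum>l<d. \<rho> \<alpha> l) = (\<Sum>l<d. real (\<alpha> l) + real (if l \<le> d - k then 0 else m (l - (d - k + 1))))"
          by (rule sum.cong) (auto simp: \<rho>_def)
        thus ?thesis by (simp only: sum.distrib of_nat_sum)
      qed
      ultimately show ?thesis by (simp add: Mm_def)
    qed
    have deg: "(\<Sum>l<d. \<rho> \<alpha> l) + Mm < real (\<Sum>l<d. n l)"
    proof -
      have "int (\<Sum>i<d. \<alpha> i) \<le> int (\<Sum>i<d. n i) - int (\<Sum>i<k. m i) - 1" using that by (simp add: S_def)
      hence "real (\<Sum>i<d. \<alpha> i) + real (\<Sum>i<k. m i) < real (\<Sum>i<d. n i)" by linarith
      thus ?thesis using sr by simp
    qed
    have inv0: "inv d (\<rho> \<alpha>) Mm n ds0 [R \<alpha>]"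
      unfolding inv_def using rhoN cnt0 len0 by (auto simp: R_def Mm_def N_def)
    have "L d (pl [R \<alpha>] (Dlist ds0 [(1, \<lambda>l. g l + real (n l), g d + real (\<Sum>l<d. n l))])) = 0"
    proof (rule alg[OF _ _ deg set0 _ inv0])
      show "\<forall>l<d. - 1 < g l \<or> 0 \<le> \<rho> \<alpha> l + g l"
        using assms(4) g_le g_gt by (auto simp: \<rho>_def)
      show "0 \<le> Mm + g d" using g_d by simp
      show "\<forall>l<d. cnt ds0 l \<le> n l" using cnt0 by simp
    qed
    thus ?thesis unfolding G_def F0_def N_def .
  qed
  have "has_bochner_integral (lebesgue_d d) (\<lambda>x. \<Sum>\<alpha>\<in>S. c \<alpha> * (indicator (Od d) x * evs d (pl [R \<alpha>] G) x)) (\<Sum>\<alpha>\<in>S. c \<alpha> * L d (pl [R \<alpha>] G))"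
    by (intro has_bochner_integral_sum has_bochner_integral_mult_right hb)
  also have "(\<Sum>\<alpha>\<in>S. c \<alpha> * L d (pl [R \<alpha>] G)) = 0" using zero by simp
  finally have H: "has_bochner_integral (lebesgue_d d) (\<lambda>x. indicator (std_simplex d) x * (rodrigues d g n x * Q x * W x)) 0"
    unfolding pw .
  have eqf: "(\<lambda>x. indicator (std_simplex d) x *\<^sub>R (rodrigues d (concat_param d k \<gamma> m) n x * Q x * (\<Prod>i\<le>d - k. x i powr \<gamma> i)))
     = (\<lambda>x. indicator (std_simplex d) x * (rodrigues d g n x * Q x * W x))"
    by (simp add: g_def W_def)
  show ?thesis
    unfolding set_integrable_def set_lebesgue_integral_def eqf
    using H unfolding has_bochner_integral_iff .
qed


end
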